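(* Let $p,q\in\mathbb N$ and $A\in\mathrm{Rec}_{p\times q}(\mathbb C)$. Then there exists a constant $C\ge0$ such that $|A[U,W]|\le C^{n+1}$ for all $n\in\mathbb N$ and all $(U,W)\in\mathcal M_{p\times q}^n$.
   Context: $\mathcal M_{p\times q}^n$ is the set of pairs $(U,W)$ of words of common length $n$ with $U\in\{0,\dots,p-1\}^n$, $W\in\{0,\dots,q-1\}^n$, and $\mathcal M_{p\times q}=\bigcup_n\mathcal M_{p\times q}^n$. For $A:\mathcal M_{p\times q}\to\mathbb C$ (values written $A[U,W]$) and $(S,T)\in\mathcal M_{p\times q}$, $(\rho(S,T)A)[U,W]=A[US,WT]$. $\mathrm{Rec}_{p\times q}(\mathbb C)$ is the set of $A$ such that the linear span of $\{\rho(S,T)A:(S,T)\in\mathcal M_{p\times q}\}$ is finite-dimensional. *)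

theory Defs
  imports Complex_Main
begin

definition Mpq :: "nat \<Rightarrow> nat \<Rightarrow> nat \<Rightarrow> (nat list \<times> nat list) set" where
  "Mpq p q n = {(U, W). length U = n \<and> length W = n \<and> (\<forall>x\<in>set U. x < p) \<and> (\<forall>x\<in>set W. x < q)}"

definition Mall :: "nat \<Rightarrow> nat \<Rightarrow> (nat list \<times> nat list) set" where
  "Mall p q = (\<Union>n. Mpq p q n)"

(* A function M_{p x q} -> C is represented by a function on all pairs of lists,
   normalised to be 0 outside M_{p x q}. *)
definition rho :: "nat \<Rightarrow> nat \<Rightarrow> nat list \<times> nat list \<Rightarrow> (nat list \<times> nat list \<Rightarrow> complex)
     \<Rightarrow> (nat list \<times> nat list \<Rightarrow> complex)" where
  "rho p q ST A = (\<lambda>(U, W). if (U, W) \<in> Mall p q then A (U @ fst ST, W @ snd ST) else 0)"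

definition cspan :: "('a \<Rightarrow> complex) set \<Rightarrow> ('a \<Rightarrow> complex) set" where
  "cspan S = {f. \<exists>F c. finite F \<and> F \<subseteq> S \<and> f = (\<lambda>x. \<Sum>g\<in>F. c g * g x)}"

(* finite-dimensional span: contained in the span of a finite set of functions *)
definition Rec :: "nat \<Rightarrow> nat \<Rightarrow> (nat list \<times> nat list \<Rightarrow> complex) set" where
  "Rec p q = {A. \<exists>B. finite B \<and> cspan {rho p q ST A | ST. ST \<in> Mall p q} \<subseteq> cspan B}"

end

theory Submission
  imports Defs "HOL-Library.Function_Algebras"
begin

interpretation fv: vector_space "\<lambda>(c::complex) (f::'a \<Rightarrow> complex) x. c * f x"
  by unfold_locales (auto simp: fun_eq_iff algebra_simps)

lemma sum_fun_app: "(\<Sum>g\<in>F. f g) x = (\<Sum>g\<in>F. f g x)"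
  by (induction F rule: infinite_finite_induct) auto

lemma cspan_sub_span: "cspan B \<subseteq> fv.span B"
proof
  fix f assume "f \<in> cspan B"
  then obtain F c where F: "finite F" "F \<subseteq> B" and f: "f = (\<lambda>x. \<Sum>g\<in>F. c g * g x)"
    unfolding cspan_def by blast
  have "f = (\<Sum>g\<in>F. (\<lambda>x. c g * g x))" by (simp add: f fun_eq_iff sum_fun_app)
  also have "\<dots> \<in> fv.span B"
    using F by (intro fv.span_sum) (auto intro: fv.span_scale[unfolded] fv.span_base)
  finally show "f \<in> fv.span B" .
qed

lemma in_cspan: "f \<in> S \<Longrightarrow> f \<in> cspan S"
  unfolding cspan_def by (rule CollectI, rule exI[of _ "{f}"], rule exI[of _ "\<lambda>_. 1"]) auto

lemma span_fin:
  assumes "finite G" "f \<in> fv.span G"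
  shows "\<exists>c. f = (\<lambda>x. \<Sum>g\<in>G. c g * g x)"
proof -
  from assms obtain u where "f = (\<Sum>v\<in>G. (\<lambda>x. u v * v x))" by (auto simp: fv.span_finite)
  then show ?thesis by (auto simp: sum_fun_app fun_eq_iff)
qed

lemma Mall_iff: "(U, W) \<in> Mall p q \<longleftrightarrow> length U = length W \<and> (\<forall>x\<in>set U. x < p) \<and> (\<forall>x\<in>set W. x < q)"
  unfolding Mall_def Mpq_def by auto

lemma rho_comp:
  assumes "a < p" "b < q"
  shows "rho p q ([a],[b]) (rho p q (S,T) A) = rho p q (a#S, b#T) A"
  using assms by (auto simp: rho_def fun_eq_iff Mall_iff)

lemma rho_lin:
  "rho p q ST (\<lambda>x. \<Sum>g\<in>G. c g * g x) = (\<lambda>x. \<Sum>g\<in>G. c g * rho p q ST g x)"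
  by (auto simp: rho_def fun_eq_iff)

theorem mainTheorem7:
  fixes p q :: nat and A :: "nat list \<times> nat list \<Rightarrow> complex"
  assumes "A \<in> Rec p q"
  shows "\<exists>C::real. C \<ge> 0 \<and> (\<forall>n. \<forall>(U, W) \<in> Mpq p q n. cmod (A (U, W)) \<le> C ^ (n + 1))"
proof -
  define T where "T = {rho p q ST A | ST. ST \<in> Mall p q}"
  obtain B where B: "finite B" "cspan T \<subseteq> cspan B"
    using assms unfolding Rec_def T_def by blast
  have TB: "T \<subseteq> fv.span B"
    using B(2) cspan_sub_span in_cspan by blast
  obtain G where G: "G \<subseteq> T" "fv.independent G" "T \<subseteq> fv.span G"
    using fv.maximal_independent_subset by blast
  have finG: "finite G"
    using fv.independent_span_bound[OF B(1) G(2)] G(1) TB by blast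
  have TG: "\<exists>c. f = (\<lambda>x. \<Sum>g\<in>G. c g * g x)" if "f \<in> T" for f
    using span_fin[OF finG] G(3) that by blast
  define ST where "ST g = (SOME st. st \<in> Mall p q \<and> g = rho p q st A)" for g
  have ST: "ST g \<in> Mall p q \<and> g = rho p q (ST g) A" if "g \<in> G" for g
  proof -
    have "\<exists>st. st \<in> Mall p q \<and> g = rho p q st A" using that G(1) unfolding T_def by blast
    then show ?thesis unfolding ST_def by (rule someI_ex)
  qed
  define M where "M g a b = (SOME c. rho p q ([a],[b]) g = (\<lambda>x. \<Sum>h\<in>G. c h * h x))" for g a b
  have M: "rho p q ([a],[b]) g = (\<lambda>x. \<Sum>h\<in>G. M g a b h * h x)"
    if "g \<in> G" "a < p" "b < q" for g a b
  proof -
    obtain S' T' where st: "ST g = (S', T')" by (cases "ST g")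
    have g: "g = rho p q (S', T') A" and m: "(S', T') \<in> Mall p q" using ST[OF that(1)] st by auto
    have eq: "rho p q ([a],[b]) g = rho p q (a#S', b#T') A"
      using g rho_comp[OF that(2,3)] by simp
    have "(a#S', b#T') \<in> Mall p q" using m that by (auto simp: Mall_iff)
    then have "rho p q ([a],[b]) g \<in> T" unfolding eq T_def by blast
    then have "\<exists>c. rho p q ([a],[b]) g = (\<lambda>x. \<Sum>h\<in>G. c h * h x)" by (rule TG)
    then show ?thesis unfolding M_def by (rule someI_ex)
  qed
  define K where "K = 1 + (\<Sum>g\<in>G. \<Sum>a<p. \<Sum>b<q. \<Sum>h\<in>G. cmod (M g a b h))"
  have K: "(\<Sum>h\<in>G. cmod (M g a b h)) \<le> K" if "g \<in> G" "a < p" "b < q" for g a b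
  proof -
    have "(\<Sum>h\<in>G. cmod (M g a b h)) \<le> (\<Sum>b<q. \<Sum>h\<in>G. cmod (M g a b h))"
      by (rule member_le_sum[of b "{..<q}" "\<lambda>b. \<Sum>h\<in>G. cmod (M g a b h)"]) (auto simp: that sum_nonneg)
    also have "\<dots> \<le> (\<Sum>a<p. \<Sum>b<q. \<Sum>h\<in>G. cmod (M g a b h))"
      by (rule member_le_sum[of a "{..<p}" "\<lambda>a. \<Sum>b<q. \<Sum>h\<in>G. cmod (M g a b h)"]) (auto simp: that sum_nonneg)
    also have "\<dots> \<le> (\<Sum>g\<in>G. \<Sum>a<p. \<Sum>b<q. \<Sum>h\<in>G. cmod (M g a b h))"
      by (rule member_le_sum[of g G "\<lambda>g. \<Sum>a<p. \<Sum>b<q. \<Sum>h\<in>G. cmod (M g a b h)"]) (auto simp: that sum_nonneg finG)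
    finally show ?thesis unfolding K_def by simp
  qed
  have K1: "K \<ge> 1" unfolding K_def by (simp add: sum_nonneg)
  have "([],[]) \<in> Mall p q" by (simp add: Mall_iff)
  then have "rho p q ([],[]) A \<in> T" unfolding T_def by blast
  then obtain c00 where c00: "rho p q ([],[]) A = (\<lambda>x. \<Sum>g\<in>G. c00 g * g x)" using TG by blast
  define c0 where "c0 = (\<Sum>g\<in>G. cmod (c00 g))"
  have c0: "c0 \<ge> 0" unfolding c0_def by (simp add: sum_nonneg)
  have ind: "\<forall>U W. (U, W) \<in> Mpq p q n \<longrightarrow> (\<exists>c. rho p q (U, W) A = (\<lambda>x. \<Sum>g\<in>G. c g * g x)
      \<and> (\<Sum>g\<in>G. cmod (c g)) \<le> c0 * K ^ n)" for n
  proof (induction n)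
    case 0
    then show ?case using c00 by (auto simp: Mpq_def c0_def)
  next
    case (Suc n)
    show ?case
    proof (intro allI impI)
      fix U W assume UW: "(U, W) \<in> Mpq p q (Suc n)"
      then obtain a U' b W' where U: "U = a # U'" and W: "W = b # W'"
        by (cases U; cases W) (auto simp: Mpq_def)
      have ab: "a < p" "b < q" and UW': "(U', W') \<in> Mpq p q n" using UW U W by (auto simp: Mpq_def)
      obtain c where c: "rho p q (U', W') A = (\<lambda>x. \<Sum>g\<in>G. c g * g x)"
        and cb: "(\<Sum>g\<in>G. cmod (c g)) \<le> c0 * K ^ n" using Suc UW' by blast
      define c' where "c' h = (\<Sum>g\<in>G. c g * M g a b h)" for h
      have "rho p q (U, W) A = rho p q ([a],[b]) (rho p q (U', W') A)"
        using rho_comp[OF ab] U W by simp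
      also have "\<dots> = (\<lambda>x. \<Sum>g\<in>G. c g * rho p q ([a],[b]) g x)" by (simp add: c rho_lin)
      also have "\<dots> = (\<lambda>x. \<Sum>g\<in>G. c g * (\<Sum>h\<in>G. M g a b h * h x))"
        using M[OF _ ab] by (intro ext sum.cong) auto
      also have "\<dots> = (\<lambda>x. \<Sum>h\<in>G. c' h * h x)"
      proof (rule ext)
        fix x
        have "(\<Sum>g\<in>G. c g * (\<Sum>h\<in>G. M g a b h * h x)) = (\<Sum>g\<in>G. \<Sum>h\<in>G. c g * M g a b h * h x)"
          by (simp add: sum_distrib_left mult.assoc)
        also have "\<dots> = (\<Sum>h\<in>G. \<Sum>g\<in>G. c g * M g a b h * h x)" by (rule sum.swap)
        also have "\<dots> = (\<Sum>h\<in>G. c' h * h x)" unfolding c'_def by (simp add: sum_distrib_right)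
        finally show "(\<Sum>g\<in>G. c g * (\<Sum>h\<in>G. M g a b h * h x)) = (\<Sum>h\<in>G. c' h * h x)" .
      qed
      finally have e: "rho p q (U, W) A = (\<lambda>x. \<Sum>h\<in>G. c' h * h x)" .
      have "(\<Sum>h\<in>G. cmod (c' h)) \<le> (\<Sum>h\<in>G. \<Sum>g\<in>G. cmod (c g) * cmod (M g a b h))"
        unfolding c'_def by (intro sum_mono) (metis (no_types, lifting) norm_mult norm_sum sum.cong)
      also have "\<dots> = (\<Sum>g\<in>G. cmod (c g) * (\<Sum>h\<in>G. cmod (M g a b h)))"
        by (subst sum.swap) (simp add: sum_distrib_left)
      also have "\<dots> \<le> (\<Sum>g\<in>G. cmod (c g) * K)"
        using K[OF _ ab] by (intro sum_mono mult_left_mono) auto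
      also have "\<dots> = (\<Sum>g\<in>G. cmod (c g)) * K" by (simp add: sum_distrib_right)
      also have "\<dots> \<le> c0 * K ^ n * K" using cb K1 by (intro mult_right_mono) auto
      also have "\<dots> = c0 * K ^ Suc n" by simp
      finally show "\<exists>c. rho p q (U, W) A = (\<lambda>x. \<Sum>g\<in>G. c g * g x)
          \<and> (\<Sum>g\<in>G. cmod (c g)) \<le> c0 * K ^ Suc n" using e by blast
    qed
  qed
  define L where "L = 1 + (\<Sum>g\<in>G. cmod (g ([],[])))"
  have L1: "L \<ge> 1" unfolding L_def by (simp add: sum_nonneg)
  have Lg: "cmod (g ([],[])) \<le> L" if "g \<in> G" for g
    unfolding L_def using member_le_sum[of g G "\<lambda>g. cmod (g ([],[]))"] that finG by auto
  define C where "C = (1 + c0) * L * K"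
  show ?thesis
  proof (intro exI[of _ C] conjI allI ballI)
    show "C \<ge> 0" unfolding C_def using c0 L1 K1 by simp
    fix n x assume x: "x \<in> Mpq p q n"
    obtain U W where xUW: "x = (U, W)" by (cases x)
    then have UW: "(U, W) \<in> Mpq p q n" using x by simp
    then obtain c where c: "rho p q (U, W) A = (\<lambda>x. \<Sum>g\<in>G. c g * g x)"
      and cb: "(\<Sum>g\<in>G. cmod (c g)) \<le> c0 * K ^ n" using ind by blast
    have "A (U, W) = rho p q (U, W) A ([],[])" by (simp add: rho_def Mall_iff)
    also have "\<dots> = (\<Sum>g\<in>G. c g * g ([],[]))" by (simp add: c)
    finally have "cmod (A (U, W)) \<le> (\<Sum>g\<in>G. cmod (c g) * cmod (g ([],[])))"
      by (metis (no_types, lifting) norm_mult norm_sum sum.cong)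
    also have "\<dots> \<le> (\<Sum>g\<in>G. cmod (c g) * L)"
      using Lg by (intro sum_mono mult_left_mono) auto
    also have "\<dots> = (\<Sum>g\<in>G. cmod (c g)) * L" by (simp add: sum_distrib_right)
    also have "\<dots> \<le> c0 * K ^ n * L" using cb L1 by (intro mult_right_mono) auto
    also have "\<dots> \<le> (1 + c0) * L * K ^ n" using c0 K1 L1 by (simp add: mult_right_mono mult.commute mult.left_commute)
    also have "\<dots> \<le> ((1 + c0) * L) ^ (n + 1) * K ^ (n + 1)"
    proof (rule mult_mono)
      have X: "(1 + c0) * L \<ge> 1" using c0 L1 by (metis add_increasing2 mult_mono' mult_1 zero_le_one le_add_same_cancel1 order_trans)
      show "(1 + c0) * L \<le> ((1 + c0) * L) ^ (n + 1)"
        using X by (metis One_nat_def le_add2 power_increasing power_one_right)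
      show "K ^ n \<le> K ^ (n + 1)" using K1 by (intro power_increasing) auto
      show "0 \<le> ((1 + c0) * L) ^ (n + 1)" using X by simp
      show "0 \<le> K ^ n" using K1 by simp
    qed
    also have "\<dots> = C ^ (n + 1)" unfolding C_def by (simp add: power_mult_distrib)
    finally show "case x of (U, W) \<Rightarrow> cmod (A (U, W)) \<le> C ^ (n + 1)" using xUW by simp
  qed
qed

end
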